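(* Let $x_1,\ldots,x_J \in \mathbb{R}^d$ be given, let $\rho \ge 0$, $\widehat\mu \in \mathbb{R}^d$ and $\widehat\Sigma \in \mathbb{S}_+^d$. Define $\Theta(\{x_j\}) = \{\theta \in \mathbb{R}^d : x_j^\top \theta \ge 0 \ \forall j \in [J]\}$, and let $\mathbb{B}$ be the set of all probability measures $\mathbb{Q}$ on $\mathbb{R}^d$ for which there exists $(\mu,\Sigma) \in \mathbb{R}^d \times \mathbb{S}_+^d$ with $\mathbb{G}((\mu,\Sigma),(\widehat\mu,\widehat\Sigma)) \le \rho$ such that the random vector $\tilde\theta \sim \mathbb{Q}$ has mean $\mu$ and covariance matrix $\Sigma$. Let $U^\star$ be the optimal value of the semidefinite program $$ U^\star = \left\{\begin{array}{cl} \inf & z_0 + \gamma(\rho^2 - \|\widehat\mu\|_2^2 - \mathrm{Tr}(\widehat\Sigma)) + q + \mathrm{Tr}(Q)\\ \text{s.t.} & \gamma \in \mathbb{R}_+,\ z_0 \in \mathbb{R},\ z \in \mathbb{R}^d,\ Z \in \mathbb{S}_+^d,\ q \in \mathbb{R}_+,\ Q \in \mathbb{S}_+^d,\ \lambda \in \mathbb{R}_+^J,\\ & \begin{bmatrix} \gamma I - Z & \gamma\widehat\Sigma^{1/2} \\ \gamma \widehat\Sigma^{1/2} & Q\end{bmatrix} \succeq 0,\quad \begin{bmatrix} \gamma I - Z & \gamma\widehat\mu + z \\ \gamma\widehat\mu^\top + z^\top & q\end{bmatrix} \succeq 0,\\ & \begin{bmatrix} Z & z \\ z^\top & z_0\end{bmatrix}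 \succeq 0,\quad \begin{bmatrix} Z & z \\ z^\top & z_0 - 1\end{bmatrix} \succeq \sum_{j\in[J]} \lambda_j \begin{bmatrix} 0 & \tfrac12 x_j \\ \tfrac12 x_j^\top & 0\end{bmatrix}. \end{array}\right. $$ Then $\sup_{\mathbb{Q}\in\mathbb{B}} \mathbb{Q}(\tilde\theta \in \Theta(\{x_j\})) \le U^\star$.
   Context: $\mathbb{S}^d$ denotes the symmetric $d\times d$ matrices, $\mathbb{S}_+^d$ the positive semidefinite ones, $[J]=\{1,\ldots,J\}$, $I$ the identity matrix. The Gelbrich distance between $(\mu_1,\Sigma_1),(\mu_2,\Sigma_2) \in \mathbb{R}^d\times\mathbb{S}_+^d$ is $$\mathbb{G}((\mu_1,\Sigma_1),(\mu_2,\Sigma_2)) = \sqrt{\|\mu_1-\mu_2\|_2^2 + \mathrm{Tr}\big(\Sigma_1+\Sigma_2 - 2(\Sigma_2^{1/2}\Sigma_1\Sigma_2^{1/2})^{1/2}\big)}.$$ *)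

theory Defs
  imports "HOL-Analysis.Analysis" "HOL-Probability.Probability" "HOL-Library.Extended_Real"
begin

definition psd :: "real^'n^'n \<Rightarrow> bool" where
  "psd M \<longleftrightarrow> transpose M = M \<and> (\<forall>v. v \<bullet> (M *v v) \<ge> 0)"

definition loewner_ge :: "real^'n^'n \<Rightarrow> real^'n^'n \<Rightarrow> bool" where
  "loewner_ge M N \<longleftrightarrow> psd (M - N)"

definition msqrt :: "real^'n^'n \<Rightarrow> real^'n^'n" where
  "msqrt A = (THE S. psd S \<and> S ** S = A)"

definition gelbrich :: "real^'n \<Rightarrow> real^'n^'n \<Rightarrow> real^'n \<Rightarrow> real^'n^'n \<Rightarrow> real" where
  "gelbrich \<mu>1 \<Sigma>1 \<mu>2 \<Sigma>2 =
     sqrt ((norm (\<mu>1 - \<mu>2))\<^sup>2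
           + trace (\<Sigma>1 + \<Sigma>2 - 2 *\<^sub>R msqrt (msqrt \<Sigma>2 ** \<Sigma>1 ** msqrt \<Sigma>2)))"

definition blockmat ::
  "real^'a^'a \<Rightarrow> real^'b^'a \<Rightarrow> real^'a^'b \<Rightarrow> real^'b^'b \<Rightarrow> real^('a + 'b)^('a + 'b)" where
  "blockmat A B C D = (\<chi> i j. case i of
       Inl r \<Rightarrow> (case j of Inl s \<Rightarrow> A $ r $ s | Inr s \<Rightarrow> B $ r $ s)
     | Inr r \<Rightarrow> (case j of Inl s \<Rightarrow> C $ r $ s | Inr s \<Rightarrow> D $ r $ s))"

definition colm :: "real^'n \<Rightarrow> real^unit^'n" where
  "colm v = (\<chi> i j. v $ i)"

definition rowm :: "real^'n \<Rightarrow> real^'n^unit" where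
  "rowm v = (\<chi> i j. v $ j)"

definition scalm :: "real \<Rightarrow> real^unit^unit" where
  "scalm c = (\<chi> i j. c)"

definition has_mean_cov :: "(real^'n) measure \<Rightarrow> real^'n \<Rightarrow> real^'n^'n \<Rightarrow> bool" where
  "has_mean_cov Q \<mu> \<Sigma> \<longleftrightarrow>
     (\<forall>i. integrable Q (\<lambda>\<theta>. \<theta> $ i)) \<and>
     (\<forall>i k. integrable Q (\<lambda>\<theta>. \<theta> $ i * \<theta> $ k)) \<and>
     (\<forall>i. (\<integral>\<theta>. \<theta> $ i \<partial>Q) = \<mu> $ i) \<and>
     (\<forall>i k. (\<integral>\<theta>. (\<theta> $ i - \<mu> $ i) * (\<theta> $ k - \<mu> $ k) \<partial>Q) = \<Sigma> $ i $ k)"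

definition gelbrich_ball :: "real \<Rightarrow> real^'n \<Rightarrow> real^'n^'n \<Rightarrow> (real^'n) measure set" where
  "gelbrich_ball \<rho> \<mu>h \<Sigma>h = {Q. prob_space Q \<and> sets Q = sets borel \<and>
      (\<exists>\<mu> \<Sigma>. psd \<Sigma> \<and> gelbrich \<mu> \<Sigma> \<mu>h \<Sigma>h \<le> \<rho> \<and> has_mean_cov Q \<mu> \<Sigma>)}"

definition Theta :: "nat \<Rightarrow> (nat \<Rightarrow> real^'n) \<Rightarrow> (real^'n) set" where
  "Theta J x = {\<theta>. \<forall>j\<in>{1..J}. x j \<bullet> \<theta> \<ge> 0}"

definition sdp_feasible ::
  "nat \<Rightarrow> (nat \<Rightarrow> real^'n) \<Rightarrow> real^'n \<Rightarrow> real^'n^'n \<Rightarrow>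
   real \<Rightarrow> real \<Rightarrow> real^'n \<Rightarrow> real^'n^'n \<Rightarrow> real \<Rightarrow> real^'n^'n \<Rightarrow> (nat \<Rightarrow> real) \<Rightarrow> bool" where
  "sdp_feasible J x \<mu>h \<Sigma>h \<gamma> z0 z Z q Qm lam \<longleftrightarrow>
     \<gamma> \<ge> 0 \<and> psd Z \<and> q \<ge> 0 \<and> psd Qm \<and> (\<forall>j\<in>{1..J}. lam j \<ge> 0) \<and>
     psd (blockmat (\<gamma> *\<^sub>R mat 1 - Z) (\<gamma> *\<^sub>R msqrt \<Sigma>h) (\<gamma> *\<^sub>R msqrt \<Sigma>h) Qm) \<and>
     psd (blockmat (\<gamma> *\<^sub>R mat 1 - Z) (colm (\<gamma> *\<^sub>R \<mu>h + z)) (rowm (\<gamma> *\<^sub>R \<mu>h + z)) (scalm q)) \<and>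
     psd (blockmat Z (colm z) (rowm z) (scalm z0)) \<and>
     loewner_ge (blockmat Z (colm z) (rowm z) (scalm (z0 - 1)))
       (\<Sum>j\<in>{1..J}. lam j *\<^sub>R blockmat 0 (colm ((1/2) *\<^sub>R x j)) (rowm ((1/2) *\<^sub>R x j)) 0)"

definition sdp_objective :: "real \<Rightarrow> real^'n \<Rightarrow> real^'n^'n \<Rightarrow>
   real \<Rightarrow> real \<Rightarrow> real \<Rightarrow> real^'n^'n \<Rightarrow> real" where
  "sdp_objective \<rho> \<mu>h \<Sigma>h \<gamma> z0 q Qm =
     z0 + \<gamma> * (\<rho>\<^sup>2 - (norm \<mu>h)\<^sup>2 - trace \<Sigma>h) + q + trace Qm"

text \<open>Optimal value U* (infimum in the extended reals; +infinity if infeasible).\<close>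
definition U_star :: "nat \<Rightarrow> (nat \<Rightarrow> real^'n) \<Rightarrow> real \<Rightarrow> real^'n \<Rightarrow> real^'n^'n \<Rightarrow> ereal" where
  "U_star J x \<rho> \<mu>h \<Sigma>h =
     (INF p \<in> {(\<gamma>, z0, z, Z, q, Qm, lam). sdp_feasible J x \<mu>h \<Sigma>h \<gamma> z0 z Z q Qm lam}.
        ereal (case p of (\<gamma>, z0, z, Z, q, Qm, lam) \<Rightarrow> sdp_objective \<rho> \<mu>h \<Sigma>h \<gamma> z0 q Qm))"

end

theory Submission
  imports Defs
begin

lemma inner_mat_sym:
  fixes A :: "real^'n^'n"
  assumes "transpose A = A"
  shows "x \<bullet> (A *v y) = (A *v x) \<bullet> y"
proof -
  have "x \<bullet> (A *v y) = (x v* A) \<bullet> y" by (simp add: dot_lmul_matrix)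
  also have "x v* A = transpose A *v x"
    by (metis transpose_transpose vector_transpose_matrix)
  finally show ?thesis using assms by simp
qed

lemma quad_nonpos_lin_zero:
  fixes a c :: real
  assumes "\<And>t. 2*t*a + t^2*c \<le> 0"
  shows "a = 0"
proof (rule ccontr)
  assume "a \<noteq> 0"
  define t where "t = a / (1 + c^2)"
  have d: "1 + c^2 > 0" by (simp add: add_pos_nonneg)
  have at: "a = (1+c^2)*t" unfolding t_def using d by simp
  have "(1+c^2)^2 * (2*t*a + t^2*c) = a^2 * (2*(1+c^2) + c)"
    unfolding at by (simp add: power2_eq_square algebra_simps)
  hence "2*t*a + t^2*c = a^2 * (2*(1+c^2) + c) / (1+c^2)^2"
    using d by (simp add: field_simps)
  moreover have "2*(1+c^2) + c > 0"
  proof -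
    have h: "0 \<le> (2*c+1/2)*(2*c+1/2)" by simp
    then show ?thesis by (simp add: power2_eq_square algebra_simps)
  qed
  moreover have "a^2 * (2*(1+c^2) + c) / (1+c^2)^2 > 0"
    using \<open>a \<noteq> 0\<close> d calculation(2) by (intro divide_pos_pos mult_pos_pos) auto
  ultimately show False using assms[of t] by simp
qed

definition eigsys :: "real^'n^'n \<Rightarrow> (real^'n) set \<Rightarrow> bool" where
  "eigsys A B \<longleftrightarrow> finite B \<and> (\<forall>b\<in>B. norm b = 1) \<and> pairwise orthogonal B \<and>
     (\<forall>b\<in>B. A *v b = (b \<bullet> (A *v b)) *\<^sub>R b)"

lemma DIM_vec_real: "DIM(real^'n) = CARD('n)"
  by (simp add: DIM_cart)

lemma spectral_step:
  fixes A :: "real^'n^'n"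
  assumes sym: "transpose A = A" and E: "eigsys A B" and cB: "card B < CARD('n)"
  shows "\<exists>e. e \<notin> B \<and> eigsys A (insert e B)"
proof -
  define V where "V = (\<Inter>b\<in>B. {v::real^'n. b \<bullet> v = 0})"
  have finB: "finite B" using E by (simp add: eigsys_def)
  have "dim B \<le> card B" using finB by (simp add: dim_le_card')
  hence "dim B < DIM(real^'n)" using cB by (simp add: DIM_vec_real)
  then obtain x :: "real^'n" where x0: "x \<noteq> 0" and xo: "\<And>y. y \<in> span B \<Longrightarrow> orthogonal x y"
    by (meson orthogonal_to_subspace_exists)
  have xV: "x \<in> V" unfolding V_def using xo span_base
    by (fastforce simp: orthogonal_def inner_commute)
  define K where "K = V \<inter> sphere 0 1"
  have "closed V" unfolding V_def by (intro closed_INT ballI closed_hyperplane)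
  hence cK: "compact K" unfolding K_def by (intro closed_Int_compact compact_sphere)
  have "x /\<^sub>R norm x \<in> K" unfolding K_def V_def using xV x0 by (auto simp: V_def)
  hence neK: "K \<noteq> {}" by auto
  have "continuous_on K (\<lambda>v. v \<bullet> (A *v v))"
    by (intro continuous_intros linear_continuous_on matrix_vector_mul_bounded_linear)
  then obtain e where eK: "e \<in> K" and emax: "\<And>y. y \<in> K \<Longrightarrow> y \<bullet> (A *v y) \<le> e \<bullet> (A *v e)"
    using continuous_attains_sup[OF cK neK] by blast
  define l where "l = e \<bullet> (A *v e)"
  have eV: "e \<in> V" and ne: "norm e = 1" using eK by (auto simp: K_def)
  have ee: "e \<bullet> e = 1" using ne by (simp add: dot_square_norm)
  have le: "v \<bullet> (A *v v) \<le> l * (v \<bullet> v)" if "v \<in> V" for v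
  proof (cases "v = 0")
    case True then show ?thesis by simp
  next
    case False
    have "v /\<^sub>R norm v \<in> K" using that False by (auto simp: K_def V_def)
    hence "(v /\<^sub>R norm v) \<bullet> (A *v (v /\<^sub>R norm v)) \<le> l" using emax l_def by blast
    hence "(v \<bullet> (A *v v)) / (norm v)^2 \<le> l"
      by (simp add: matrix_vector_mult_scaleR power2_eq_square divide_inverse ac_simps)
    moreover have "v \<bullet> v = (norm v)^2" by (simp add: dot_square_norm)
    moreover have "(norm v)^2 > 0" using False by simp
    ultimately show ?thesis by (simp add: divide_le_eq)
  qed
  have orth: "w \<bullet> (A *v e - l *\<^sub>R e) = 0" if wV: "w \<in> V" for w
  proof -
    have "2*t*(w \<bullet> (A *v e - l *\<^sub>R e)) + t^2*(w \<bullet> (A *v w) - l * (w \<bullet> w)) \<le> 0" for t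
    proof -
      have "e + t *\<^sub>R w \<in> V" using eV wV by (auto simp: V_def inner_add_right)
      hence h: "(e + t *\<^sub>R w) \<bullet> (A *v (e + t *\<^sub>R w)) \<le> l * ((e + t *\<^sub>R w) \<bullet> (e + t *\<^sub>R w))"
        by (rule le)
      have s: "e \<bullet> (A *v w) = w \<bullet> (A *v e)" using inner_mat_sym[OF sym, of e w]
        by (simp add: inner_commute)
      have "(e + t *\<^sub>R w) \<bullet> (A *v (e + t *\<^sub>R w)) = l + 2*t*(w \<bullet> (A *v e)) + t^2 * (w \<bullet> (A *v w))"
        by (simp add: matrix_vector_right_distrib matrix_vector_mult_scaleR inner_add_left
            inner_add_right s l_def power2_eq_square algebra_simps)
      moreover have "(e + t *\<^sub>R w) \<bullet> (e + t *\<^sub>R w) = 1 + 2*t*(w \<bullet> e) + t^2*(w \<bullet> w)"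
        by (simp add: inner_add_left inner_add_right ee inner_commute power2_eq_square algebra_simps)
      ultimately have "l + 2*t*(w \<bullet> (A *v e)) + t^2 * (w \<bullet> (A *v w)) \<le> l * (1 + 2*t*(w \<bullet> e) + t^2*(w \<bullet> w))"
        using h by simp
      then show ?thesis by (simp add: inner_diff_right algebra_simps)
    qed
    then show ?thesis by (rule quad_nonpos_lin_zero)
  qed
  have inV: "A *v e - l *\<^sub>R e \<in> V"
  proof -
    have "b \<bullet> (A *v e - l *\<^sub>R e) = 0" if "b \<in> B" for b
    proof -
      have be: "b \<bullet> e = 0" using eV that by (auto simp: V_def)
      have "b \<bullet> (A *v e) = (A *v b) \<bullet> e" by (rule inner_mat_sym[OF sym])
      also have "\<dots> = 0" using E that be by (subst (asm) eigsys_def, metis inner_scaleR_left mult_zero_right)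
      finally show ?thesis using be by (simp add: inner_diff_right)
    qed
    then show ?thesis by (simp add: V_def)
  qed
  have "A *v e = l *\<^sub>R e" using orth[OF inV] by simp
  hence eig: "A *v e = (e \<bullet> (A *v e)) *\<^sub>R e" by (simp add: l_def)
  have eB: "e \<notin> B" using eV ee by (auto simp: V_def)
  have "pairwise orthogonal (insert e B)"
    using E eV by (intro pairwise_orthogonal_insert) (auto simp: eigsys_def V_def orthogonal_def inner_commute)
  then have "eigsys A (insert e B)" using E ne eig by (auto simp: eigsys_def)
  then show ?thesis using eB by blast
qed

lemma spectral_exists:
  fixes A :: "real^'n^'n"
  assumes sym: "transpose A = A"
  shows "\<exists>B. eigsys A B \<and> card B = CARD('n)"
proof -
  have "k \<le> CARD('n) \<Longrightarrow> \<exists>B. eigsys A B \<and> card B = k" for k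
  proof (induction k)
    case 0
    have "eigsys A {}" by (simp add: eigsys_def)
    then show ?case by force
  next
    case (Suc k)
    then obtain B where B: "eigsys A B" "card B = k" by auto
    then obtain e where "e \<notin> B" "eigsys A (insert e B)"
      using spectral_step[OF sym B(1)] Suc.prems by auto
    moreover have "finite B" using B by (simp add: eigsys_def)
    ultimately show ?case using B by (intro exI[of _ "insert e B"]) auto
  qed
  then show ?thesis by blast
qed

definition onb :: "(real^'n) set \<Rightarrow> bool" where
  "onb B \<longleftrightarrow> finite B \<and> (\<forall>b\<in>B. norm b = 1) \<and> pairwise orthogonal B \<and> card B = CARD('n)"

lemma eigsys_onb: "eigsys A B \<Longrightarrow> card B = CARD('n) \<Longrightarrow> onb (B :: (real^'n) set)"
  by (simp add: eigsys_def onb_def)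

lemma onb_self: "onb B \<Longrightarrow> b \<in> B \<Longrightarrow> b \<bullet> b = 1"
  by (simp add: onb_def dot_square_norm)

lemma onb_orth: "onb B \<Longrightarrow> b \<in> B \<Longrightarrow> c \<in> B \<Longrightarrow> b \<noteq> c \<Longrightarrow> b \<bullet> c = 0"
  by (simp add: onb_def pairwise_def orthogonal_def)

lemma onb_sum_delta:
  assumes "onb B" "c \<in> B"
  shows "(\<Sum>b\<in>B. f b * (c \<bullet> b)) = f c"
proof -
  have fin: "finite B" using assms by (simp add: onb_def)
  have "(\<Sum>b\<in>B. f b * (c \<bullet> b)) = f c * (c \<bullet> c) + (\<Sum>b\<in>B-{c}. f b * (c \<bullet> b))"
    using sum.remove[OF fin assms(2)] by simp
  also have "(\<Sum>b\<in>B-{c}. f b * (c \<bullet> b)) = 0"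
    using assms onb_orth[OF assms(1) assms(2)] by (intro sum.neutral) auto
  finally show ?thesis using onb_self[OF assms] by simp
qed

lemma onb_expand:
  fixes v :: "real^'n"
  assumes B: "onb B"
  shows "v = (\<Sum>b\<in>B. (b \<bullet> v) *\<^sub>R b)"
proof (rule ccontr)
  define w where "w = v - (\<Sum>b\<in>B. (b \<bullet> v) *\<^sub>R b)"
  assume "v \<noteq> (\<Sum>b\<in>B. (b \<bullet> v) *\<^sub>R b)"
  hence w0: "w \<noteq> 0" by (simp add: w_def)
  have cw: "c \<bullet> w = 0" if "c \<in> B" for c
  proof -
    have "c \<bullet> (\<Sum>b\<in>B. (b \<bullet> v) *\<^sub>R b) = (\<Sum>b\<in>B. (b \<bullet> v) * (c \<bullet> b))"
      by (simp add: inner_sum_right)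
    also have "\<dots> = c \<bullet> v" by (rule onb_sum_delta[OF B that])
    finally show ?thesis by (simp add: w_def inner_diff_right)
  qed
  have fin: "finite B" and n1: "\<forall>b\<in>B. norm b = 1" and po: "pairwise orthogonal B"
    and cB: "card B = CARD('n)" using B by (auto simp: onb_def)
  have wB: "w \<notin> B" using cw w0 by (metis inner_eq_zero_iff)
  have "pairwise orthogonal (insert w B)"
    using po cw by (intro pairwise_orthogonal_insert) (auto simp: orthogonal_def inner_commute)
  moreover have "0 \<notin> insert w B" using w0 n1 by auto
  ultimately have "independent (insert w B)" by (rule pairwise_orthogonal_independent)
  hence "card (insert w B) \<le> DIM(real^'n)" by (rule independent_card_le)
  moreover have "card (insert w B) = Suc (CARD('n))" using fin wB cB by simp
  ultimately show False by (simp add: DIM_vec_real)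
qed

lemma onb_parseval:
  fixes u v :: "real^'n"
  assumes B: "onb B"
  shows "u \<bullet> v = (\<Sum>b\<in>B. (b \<bullet> u) * (b \<bullet> v))"
proof -
  have "u \<bullet> v = (\<Sum>b\<in>B. (b \<bullet> u) *\<^sub>R b) \<bullet> v" using onb_expand[OF B, of u] by simp
  also have "\<dots> = (\<Sum>b\<in>B. (b \<bullet> u) * (b \<bullet> v))" by (simp add: inner_sum_left)
  finally show ?thesis .
qed

lemma onb_trace:
  fixes M :: "real^'n^'n"
  assumes B: "onb B"
  shows "trace M = (\<Sum>b\<in>B. b \<bullet> (M *v b))"
proof -
  have d: "(\<Sum>b\<in>B. b$i * b$j) = (if i = j then 1 else 0)" for i j
  proof -
    have "(\<Sum>b\<in>B. b$i * b$j) = (\<Sum>b\<in>B. (b \<bullet> axis i 1) * (b \<bullet> axis j 1))"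
      by (simp add: inner_axis)
    also have "\<dots> = axis i (1::real) \<bullet> axis j 1" by (rule onb_parseval[OF B, symmetric])
    finally show ?thesis by (simp add: inner_axis_axis)
  qed
  have "(\<Sum>b\<in>B. b \<bullet> (M *v b)) = (\<Sum>b\<in>B. \<Sum>i\<in>UNIV. \<Sum>j\<in>UNIV. M$i$j * (b$i * b$j))"
    by (simp add: inner_vec_def matrix_vector_mult_def sum_distrib_left ac_simps)
  also have "\<dots> = (\<Sum>i\<in>UNIV. \<Sum>j\<in>UNIV. M$i$j * (\<Sum>b\<in>B. b$i * b$j))"
    by (simp add: sum_distrib_left sum.swap[of _ B])
  also have "\<dots> = (\<Sum>i\<in>UNIV. \<Sum>j\<in>UNIV. if i = j then M$i$j else 0)"
    by (intro sum.cong refl) (simp add: d)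
  also have "\<dots> = (\<Sum>i\<in>UNIV. M$i$i)" by simp
  finally show ?thesis by (simp add: trace_def)
qed

lemma mv_sum_scale:
  fixes A :: "real^'n^'n"
  assumes "finite B"
  shows "A *v (\<Sum>b\<in>B. f b *\<^sub>R g b) = (\<Sum>b\<in>B. f b *\<^sub>R (A *v g b))"
  using assms by (induction B rule: finite_induct)
    (simp_all add: matrix_vector_right_distrib matrix_vector_mult_scaleR)

lemma psd_quad: "psd A \<Longrightarrow> 0 \<le> v \<bullet> (A *v v)"
  by (simp add: psd_def)

lemma psd_sym: "psd A \<Longrightarrow> transpose A = A"
  by (simp add: psd_def)

lemma psd_eig_sqrt:
  fixes S :: "real^'n^'n"
  assumes S: "psd S" and e: "S *v (S *v b) = l *\<^sub>R b" and l: "l \<ge> 0"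
  shows "S *v b = sqrt l *\<^sub>R b"
proof (cases "l = 0")
  case True
  have "(S *v b) \<bullet> (S *v b) = b \<bullet> (S *v (S *v b))"
    using inner_mat_sym[OF psd_sym[OF S], of b "S *v b"] by simp
  also have "\<dots> = 0" using e True by simp
  finally show ?thesis using True by simp
next
  case False
  define s where "s = sqrt l"
  have s0: "s > 0" using False l by (simp add: s_def)
  have ss: "s * s = l" using l by (simp add: s_def)
  define w where "w = S *v b - s *\<^sub>R b"
  have "S *v w + s *\<^sub>R w = S *v (S *v b) - (s * s) *\<^sub>R b"
    by (simp add: w_def matrix_vector_mult_diff_distrib matrix_vector_mult_scaleR algebra_simps)
  hence Sw: "S *v w + s *\<^sub>R w = 0" using e ss by simp
  have "w \<bullet> (S *v w) + s * (w \<bullet> w) = w \<bullet> (S *v w + s *\<^sub>R w)" by (simp add: inner_add_right)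
  hence "w \<bullet> (S *v w) + s * (w \<bullet> w) = 0" using Sw by simp
  moreover have "w \<bullet> (S *v w) \<ge> 0" using S by (rule psd_quad)
  moreover have "w \<bullet> w \<ge> 0" by simp
  moreover have "s * (w \<bullet> w) \<ge> 0" using s0 by simp
  ultimately have "s * (w \<bullet> w) = 0" by linarith
  hence "w = 0" using s0 by simp
  thus ?thesis by (simp add: w_def s_def)
qed

lemma psd_sqrt_exists:
  fixes A :: "real^'n^'n"
  assumes A: "psd A"
  shows "\<exists>S. psd S \<and> S ** S = A"
proof -
  obtain B where E: "eigsys A B" and cB: "card B = CARD('n)"
    using spectral_exists[OF psd_sym[OF A]] by blast
  have B: "onb B" by (rule eigsys_onb[OF E cB])
  have fin: "finite B" using B by (simp add: onb_def)
  define lam where "lam b = b \<bullet> (A *v b)" for b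
  have lam0: "lam b \<ge> 0" for b using A by (simp add: lam_def psd_quad)
  have Ab: "A *v b = lam b *\<^sub>R b" if "b \<in> B" for b using E that by (simp add: eigsys_def lam_def)
  define S :: "real^'n^'n" where "S = (\<chi> i j. \<Sum>b\<in>B. sqrt (lam b) * b$i * b$j)"
  have Sv: "S *v v = (\<Sum>b\<in>B. (sqrt (lam b) * (b \<bullet> v)) *\<^sub>R b)" for v
  proof -
    have "(S *v v)$i = (\<Sum>b\<in>B. (sqrt (lam b) * (b \<bullet> v)) *\<^sub>R b)$i" for i
      by (simp add: S_def matrix_vector_mult_def inner_vec_def sum_component sum_distrib_left
          sum_distrib_right sum.swap[of _ B] ac_simps)
    then show ?thesis by (simp add: vec_eq_iff)
  qed
  have St: "transpose S = S" by (simp add: S_def transpose_def vec_eq_iff ac_simps)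
  have Sq: "v \<bullet> (S *v v) \<ge> 0" for v
  proof -
    have "v \<bullet> (S *v v) = (\<Sum>b\<in>B. sqrt (lam b) * (b \<bullet> v) * (b \<bullet> v))"
      by (simp add: Sv inner_sum_right inner_commute)
    also have "\<dots> \<ge> 0" using lam0 by (intro sum_nonneg) (simp add: mult.assoc)
    finally show ?thesis .
  qed
  have "(S ** S) *v v = A *v v" for v
  proof -
    have bS: "c \<bullet> (S *v v) = sqrt (lam c) * (c \<bullet> v)" if "c \<in> B" for c
      using onb_sum_delta[OF B that, of "\<lambda>b. sqrt (lam b) * (b \<bullet> v)"]
      by (simp add: Sv inner_sum_right)
    have "(S ** S) *v v = S *v (S *v v)" by (simp add: matrix_vector_mul_assoc)
    also have "\<dots> = (\<Sum>b\<in>B. (sqrt (lam b) * (b \<bullet> (S *v v))) *\<^sub>R b)" by (rule Sv)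
    also have "\<dots> = (\<Sum>b\<in>B. (lam b * (b \<bullet> v)) *\<^sub>R b)"
      using lam0 by (intro sum.cong refl) (simp add: bS mult.assoc[symmetric] real_sqrt_mult_self)
    also have "\<dots> = (\<Sum>b\<in>B. (b \<bullet> v) *\<^sub>R (A *v b))"
      by (intro sum.cong refl) (simp add: Ab)
    also have "\<dots> = A *v (\<Sum>b\<in>B. (b \<bullet> v) *\<^sub>R b)"
      by (simp add: mv_sum_scale[OF fin])
    also have "\<dots> = A *v v" using onb_expand[OF B, of v, symmetric] by simp
    finally show ?thesis .
  qed
  hence "S ** S = A" by (simp add: matrix_eq)
  moreover have "psd S" using St Sq by (simp add: psd_def)
  ultimately show ?thesis by blast
qed

lemma psd_sqrt_unique:
  fixes A :: "real^'n^'n"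
  assumes A: "psd A" and S1: "psd S1" "S1 ** S1 = A" and S2: "psd S2" "S2 ** S2 = A"
  shows "S1 = S2"
proof -
  obtain B where E: "eigsys A B" and cB: "card B = CARD('n)"
    using spectral_exists[OF psd_sym[OF A]] by blast
  have B: "onb B" by (rule eigsys_onb[OF E cB])
  have fin: "finite B" using B by (simp add: onb_def)
  have key: "S *v b = sqrt (b \<bullet> (A *v b)) *\<^sub>R b" if "psd S" "S ** S = A" "b \<in> B" for S b
  proof (rule psd_eig_sqrt[OF that(1)])
    show "S *v (S *v b) = (b \<bullet> (A *v b)) *\<^sub>R b"
      using E that by (simp add: matrix_vector_mul_assoc eigsys_def)
    show "0 \<le> b \<bullet> (A *v b)" using A by (rule psd_quad)
  qed
  have "S1 *v v = S2 *v v" for v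
    by (subst (1 2) onb_expand[OF B, of v]) (simp add: mv_sum_scale[OF fin] key S1 S2)
  then show ?thesis by (simp add: matrix_eq)
qed

lemma msqrt_props:
  fixes A :: "real^'n^'n"
  assumes A: "psd A"
  shows "psd (msqrt A) \<and> msqrt A ** msqrt A = A"
proof -
  have "\<exists>!S. psd S \<and> S ** S = A"
    using psd_sqrt_exists[OF A] psd_sqrt_unique[OF A] by blast
  then show ?thesis unfolding msqrt_def by (rule theI')
qed



lemma sum_UNIV_plus:
  "sum f (UNIV :: ('a::finite + 'b::finite) set) = sum (\<lambda>r. f (Inl r)) UNIV + sum (\<lambda>s. f (Inr s)) UNIV"
proof -
  have "sum f (UNIV :: ('a + 'b) set) = sum f (range Inl) + sum f (range Inr)"
    by (subst UNIV_sum, rule sum.union_disjoint) auto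
  also have "\<dots> = sum (\<lambda>r. f (Inl r)) UNIV + sum (\<lambda>s. f (Inr s)) UNIV"
    by (simp add: sum.reindex)
  finally show ?thesis .
qed

definition join :: "real^'a \<Rightarrow> real^'b \<Rightarrow> real^('a + 'b)" where
  "join u w = (\<chi> i. case i of Inl r \<Rightarrow> u$r | Inr s \<Rightarrow> w$s)"

lemma block_quad:
  fixes A :: "real^'a^'a" and B :: "real^'b^'a" and C :: "real^'a^'b" and D :: "real^'b^'b"
  shows "join u w \<bullet> (blockmat A B C D *v join u w) =
    u \<bullet> (A *v u) + u \<bullet> (B *v w) + w \<bullet> (C *v u) + w \<bullet> (D *v w)"
  by (simp add: join_def blockmat_def inner_vec_def matrix_vector_mult_def sum_UNIV_plus
      sum_distrib_left distrib_left sum.distrib)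

lemma psd_block:
  fixes A :: "real^'a^'a" and B :: "real^'b^'a" and C :: "real^'a^'b" and D :: "real^'b^'b"
  assumes "psd (blockmat A B C D)"
  shows "0 \<le> u \<bullet> (A *v u) + u \<bullet> (B *v w) + w \<bullet> (C *v u) + w \<bullet> (D *v w)"
  using psd_quad[OF assms, of "join u w"] by (simp add: block_quad)

definition sv :: "real \<Rightarrow> real^unit" where "sv t = (\<chi> i. t)"

lemma colm_sv: "colm c *v sv t = t *\<^sub>R c"
  by (simp add: colm_def sv_def matrix_vector_mult_def vec_eq_iff UNIV_unit)

lemma sv_rowm: "sv t \<bullet> (rowm c *v u) = t * (c \<bullet> u)"
  by (simp add: rowm_def sv_def matrix_vector_mult_def inner_vec_def UNIV_unit)

lemma sv_scalm: "sv t \<bullet> (scalm q *v sv t) = q * t^2"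
  by (simp add: scalm_def sv_def matrix_vector_mult_def inner_vec_def UNIV_unit power2_eq_square)

lemma sum_mat_mv:
  fixes F :: "'j \<Rightarrow> real^'a^'b"
  assumes "finite S"
  shows "(sum F S) *v v = (\<Sum>j\<in>S. F j *v v)"
  using assms by (induction S rule: finite_induct) (simp_all add: matrix_vector_mult_add_rdistrib)

lemma quad_feas:
  fixes Z :: "real^'n^'n"
  assumes F: "sdp_feasible J x \<mu>h \<Sigma>h \<gamma> z0 z Z q Qm lam"
  shows "0 \<le> \<theta> \<bullet> (Z *v \<theta>) + 2 * (z \<bullet> \<theta>) + z0"
    and "\<theta> \<in> Theta J x \<Longrightarrow> 1 \<le> \<theta> \<bullet> (Z *v \<theta>) + 2 * (z \<bullet> \<theta>) + z0"
proof -
  have p3: "psd (blockmat Z (colm z) (rowm z) (scalm z0))" using F by (simp add: sdp_feasible_def)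
  show "0 \<le> \<theta> \<bullet> (Z *v \<theta>) + 2 * (z \<bullet> \<theta>) + z0"
    using psd_block[OF p3, of \<theta> "sv 1"] by (simp add: colm_sv sv_rowm sv_scalm inner_commute)
  assume th: "\<theta> \<in> Theta J x"
  define N where "N = (\<Sum>j\<in>{1..J}. lam j *\<^sub>R blockmat (0::real^'n^'n) (colm ((1/2) *\<^sub>R x j)) (rowm ((1/2) *\<^sub>R x j)) (0::real^unit^unit))"
  have p4: "psd (blockmat Z (colm z) (rowm z) (scalm (z0 - 1)) - N)"
    using F by (simp add: sdp_feasible_def loewner_ge_def N_def)
  have "0 \<le> join \<theta> (sv 1) \<bullet> ((blockmat Z (colm z) (rowm z) (scalm (z0 - 1)) - N) *v join \<theta> (sv 1))"
    using p4 by (rule psd_quad)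
  also have "\<dots> = join \<theta> (sv 1) \<bullet> (blockmat Z (colm z) (rowm z) (scalm (z0 - 1)) *v join \<theta> (sv 1))
      - join \<theta> (sv 1) \<bullet> (N *v join \<theta> (sv 1))"
    by (simp add: matrix_vector_mult_diff_rdistrib inner_diff_right)
  also have "join \<theta> (sv 1) \<bullet> (blockmat Z (colm z) (rowm z) (scalm (z0 - 1)) *v join \<theta> (sv 1))
      = \<theta> \<bullet> (Z *v \<theta>) + 2 * (z \<bullet> \<theta>) + z0 - 1"
    by (simp add: block_quad colm_sv sv_rowm sv_scalm inner_commute)
  also have "join \<theta> (sv 1) \<bullet> (N *v join \<theta> (sv 1)) = (\<Sum>j\<in>{1..J}. lam j * (x j \<bullet> \<theta>))"
    by (simp add: N_def sum_mat_mv inner_sum_right scaleR_matrix_vector_assoc[symmetric]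
        block_quad colm_sv sv_rowm inner_commute)
  finally have "(\<Sum>j\<in>{1..J}. lam j * (x j \<bullet> \<theta>)) \<le> \<theta> \<bullet> (Z *v \<theta>) + 2 * (z \<bullet> \<theta>) + z0 - 1"
    by simp
  moreover have "0 \<le> (\<Sum>j\<in>{1..J}. lam j * (x j \<bullet> \<theta>))"
    using F th by (intro sum_nonneg) (auto simp: sdp_feasible_def Theta_def)
  ultimately show "1 \<le> \<theta> \<bullet> (Z *v \<theta>) + 2 * (z \<bullet> \<theta>) + z0" by simp
qed



lemma sym_entry: "transpose (S::real^'n^'n) = S \<Longrightarrow> S$k$i = S$i$k"
  by (metis transpose_def vec_lambda_beta)

lemma expect_bound:
  fixes Q :: "(real^'n) measure" and Z \<Sigma> :: "real^'n^'n"
  assumes P: "prob_space Q" "sets Q = sets borel" and H: "has_mean_cov Q \<mu> \<Sigma>"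
    and Ssym: "transpose \<Sigma> = \<Sigma>"
    and f0: "\<And>\<theta>. 0 \<le> \<theta> \<bullet> (Z *v \<theta>) + 2 * (z \<bullet> \<theta>) + z0"
    and f1: "\<And>\<theta>. \<theta> \<in> Th \<Longrightarrow> 1 \<le> \<theta> \<bullet> (Z *v \<theta>) + 2 * (z \<bullet> \<theta>) + z0"
    and Th: "Th \<in> sets borel"
  shows "measure Q Th \<le> trace (Z ** \<Sigma>) + \<mu> \<bullet> (Z *v \<mu>) + 2 * (z \<bullet> \<mu>) + z0"
proof -
  interpret prob_space Q by (rule P(1))
  have sp: "space Q = UNIV" using sets_eq_imp_space_eq[OF P(2)] by simp
  have I1: "\<And>i. integrable Q (\<lambda>\<theta>. \<theta> $ i)" and I2: "\<And>i k. integrable Q (\<lambda>\<theta>. \<theta> $ i * \<theta> $ k)"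
    and E1: "\<And>i. (\<integral>\<theta>. \<theta> $ i \<partial>Q) = \<mu> $ i"
    and C: "\<And>i k. (\<integral>\<theta>. (\<theta> $ i - \<mu> $ i) * (\<theta> $ k - \<mu> $ k) \<partial>Q) = \<Sigma> $ i $ k"
    using H by (auto simp: has_mean_cov_def)
  have E2: "(\<integral>\<theta>. \<theta> $ i * \<theta> $ k \<partial>Q) = \<Sigma> $ i $ k + \<mu>$i * \<mu>$k" for i k
  proof -
    have "\<Sigma> $ i $ k = (\<integral>\<theta>. (\<theta> $ i - \<mu> $ i) * (\<theta> $ k - \<mu> $ k) \<partial>Q)" using C by simp
    also have "\<dots> = (\<integral>\<theta>. (\<theta> $ i * \<theta> $ k - \<mu>$k * \<theta> $ i) - (\<mu>$i * \<theta> $ k - \<mu>$i * \<mu>$k) \<partial>Q)"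
      by (rule arg_cong[where f="integral\<^sup>L Q"]) (auto simp: fun_eq_iff algebra_simps)
    also have "\<dots> = (\<integral>\<theta>. \<theta> $ i * \<theta> $ k \<partial>Q) - \<mu>$k * \<mu>$i - (\<mu>$i * \<mu>$k - \<mu>$i * \<mu>$k)"
      using I1 I2 E1 by (simp add: integral_diff prob_space)
    finally show ?thesis by (simp add: algebra_simps)
  qed
  define f where "f \<theta> = (\<Sum>i\<in>UNIV. \<Sum>k\<in>UNIV. Z$i$k * (\<theta>$i * \<theta>$k)) + 2 * (\<Sum>i\<in>UNIV. z$i * \<theta>$i) + z0"
    for \<theta> :: "real^'n"
  have feq: "\<theta> \<bullet> (Z *v \<theta>) + 2 * (z \<bullet> \<theta>) + z0 = f \<theta>" for \<theta>
    by (simp add: f_def inner_vec_def matrix_vector_mult_def sum_distrib_left ac_simps)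
  have If: "integrable Q f"
    unfolding f_def using I1 I2 by (auto intro!: integrable_add integrable_sum integrable_mult_right)
  have intf: "(\<integral>\<theta>. f \<theta> \<partial>Q) = (\<Sum>i\<in>UNIV. \<Sum>k\<in>UNIV. Z$i$k * (\<Sigma> $ i $ k + \<mu>$i * \<mu>$k)) + 2 * (\<Sum>i\<in>UNIV. z$i * \<mu>$i) + z0"
    unfolding f_def using I1 I2 by (simp add: integral_add integral_sum integrable_sum E1 E2 prob_space)
  have "measure Q Th = (\<integral>\<theta>. indicator Th \<theta> \<partial>Q)" by (simp add: sp)
  also have "\<dots> \<le> (\<integral>\<theta>. f \<theta> \<partial>Q)"
  proof (rule integral_mono'[OF If])
    fix \<theta> assume "\<theta> \<in> space Q"
    show "indicator Th \<theta> \<le> f \<theta>" using f0[of \<theta>] f1[of \<theta>] feq[of \<theta>] by (auto simp: indicator_def)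
    show "0 \<le> f \<theta>" using f0[of \<theta>] feq[of \<theta>] by simp
  qed
  also have "\<dots> = trace (Z ** \<Sigma>) + \<mu> \<bullet> (Z *v \<mu>) + 2 * (z \<bullet> \<mu>) + z0"
    unfolding intf using sym_entry[OF Ssym]
    by (simp add: trace_def matrix_matrix_mult_def inner_vec_def matrix_vector_mult_def
        sum_distrib_left distrib_left sum.distrib ac_simps)
  finally show ?thesis .
qed



lemma bessel_form:
  fixes Sg :: "real^'n^'n" and u :: "'i \<Rightarrow> real^'n"
  assumes Sg: "psd Sg" and fin: "finite F"
    and on: "\<And>b b'. b \<in> F \<Longrightarrow> b' \<in> F \<Longrightarrow> u b \<bullet> (Sg *v u b') = (if b = b' then 1 else 0)"
  shows "(\<Sum>b\<in>F. (u b \<bullet> (Sg *v c))^2) \<le> c \<bullet> (Sg *v c)"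
proof -
  define \<alpha> where "\<alpha> b = u b \<bullet> (Sg *v c)" for b
  define y where "y = (\<Sum>b\<in>F. \<alpha> b *\<^sub>R u b)"
  have Sy: "Sg *v y = (\<Sum>b\<in>F. \<alpha> b *\<^sub>R (Sg *v u b))" unfolding y_def by (rule mv_sum_scale[OF fin])
  have yc: "y \<bullet> (Sg *v c) = (\<Sum>b\<in>F. (\<alpha> b)^2)"
    by (simp add: y_def inner_sum_left \<alpha>_def power2_eq_square)
  have uy: "u b \<bullet> (Sg *v y) = \<alpha> b" if "b \<in> F" for b
  proof -
    have "u b \<bullet> (Sg *v y) = (\<Sum>b'\<in>F. \<alpha> b' * (if b = b' then 1 else 0))"
      using on[OF that] by (simp add: Sy inner_sum_right)
    also have "\<dots> = \<alpha> b" using fin that by (simp add: if_distrib cong: if_cong)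
    finally show ?thesis .
  qed
  have yw: "y \<bullet> w = (\<Sum>b\<in>F. \<alpha> b * (u b \<bullet> w))" for w
    by (simp add: y_def inner_sum_left)
  have yy: "y \<bullet> (Sg *v y) = (\<Sum>b\<in>F. (\<alpha> b)^2)"
    unfolding yw[of "Sg *v y"] by (intro sum.cong refl) (simp add: uy power2_eq_square)
  have cy: "c \<bullet> (Sg *v y) = y \<bullet> (Sg *v c)"
    using inner_mat_sym[OF psd_sym[OF Sg], of c y] by (simp add: inner_commute)
  have "0 \<le> (c - y) \<bullet> (Sg *v (c - y))" using Sg by (rule psd_quad)
  also have "\<dots> = c \<bullet> (Sg *v c) - c \<bullet> (Sg *v y) - y \<bullet> (Sg *v c) + y \<bullet> (Sg *v y)"
    by (simp add: matrix_vector_mult_diff_distrib inner_diff_left inner_diff_right)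
  finally show ?thesis using cy yc yy by (simp add: \<alpha>_def)
qed

lemma quad_eig:
  fixes M :: "real^'n^'n"
  assumes B: "onb B" and E: "eigsys M B"
  shows "u \<bullet> (M *v u) = (\<Sum>c\<in>B. (c \<bullet> (M *v c)) * (c \<bullet> u)^2)"
proof -
  have fin: "finite B" using B by (simp add: onb_def)
  have "M *v u = M *v (\<Sum>c\<in>B. (c \<bullet> u) *\<^sub>R c)" using onb_expand[OF B, of u] by simp
  also have "\<dots> = (\<Sum>c\<in>B. (c \<bullet> u) *\<^sub>R (M *v c))" by (rule mv_sum_scale[OF fin])
  also have "\<dots> = (\<Sum>c\<in>B. ((c \<bullet> u) * (c \<bullet> (M *v c))) *\<^sub>R c)"
  proof (intro sum.cong refl)
    fix c assume "c \<in> B"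
    then have "M *v c = (c \<bullet> (M *v c)) *\<^sub>R c" using E by (simp add: eigsys_def)
    then show "(c \<bullet> u) *\<^sub>R (M *v c) = ((c \<bullet> u) * (c \<bullet> (M *v c))) *\<^sub>R c"
      by (metis scaleR_scaleR)
  qed
  finally have "u \<bullet> (M *v u) = (\<Sum>c\<in>B. (c \<bullet> u) * (c \<bullet> (M *v c)) * (u \<bullet> c))"
    by (simp add: inner_sum_right)
  then show ?thesis by (simp add: power2_eq_square inner_commute ac_simps)
qed

lemma trace_eig:
  fixes M Sg :: "real^'n^'n"
  assumes B: "onb B" and E: "eigsys M B" and Ms: "transpose M = M"
  shows "trace (M ** Sg) = (\<Sum>c\<in>B. (c \<bullet> (M *v c)) * (c \<bullet> (Sg *v c)))"
proof -
  have "trace (M ** Sg) = (\<Sum>c\<in>B. c \<bullet> ((M ** Sg) *v c))" by (rule onb_trace[OF B])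
  also have "\<dots> = (\<Sum>c\<in>B. (M *v c) \<bullet> (Sg *v c))"
    by (intro sum.cong refl) (simp add: matrix_vector_mul_assoc[symmetric] inner_mat_sym[OF Ms])
  also have "\<dots> = (\<Sum>c\<in>B. (c \<bullet> (M *v c)) * (c \<bullet> (Sg *v c)))"
  proof (intro sum.cong refl)
    fix c assume "c \<in> B"
    then have "M *v c = (c \<bullet> (M *v c)) *\<^sub>R c" using E by (simp add: eigsys_def)
    then show "(M *v c) \<bullet> (Sg *v c) = (c \<bullet> (M *v c)) * (c \<bullet> (Sg *v c))"
      by (metis inner_scaleR_left)
  qed
  finally show ?thesis .
qed



lemma mv_uminus: "(A::real^'n^'m) *v (- w) = - (A *v w)"
  by (simp add: vec_eq_iff matrix_vector_mult_def sum_negf)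

lemma key_trace:
  fixes M Sg S Qm T :: "real^'n^'n" and \<gamma> :: real
  assumes Sg: "psd Sg" and Ss: "transpose S = S" and g0: "\<gamma> \<ge> 0" and Ms: "transpose M = M"
    and blk: "psd (blockmat M (\<gamma> *\<^sub>R S) (\<gamma> *\<^sub>R S) Qm)"
    and T: "psd T" "T ** T = S ** Sg ** S"
  shows "2 * \<gamma> * trace T \<le> trace (M ** Sg) + trace Qm"
proof -
  have bq: "0 \<le> u \<bullet> (M *v u) - 2 * \<gamma> * (u \<bullet> (S *v w)) + w \<bullet> (Qm *v w)" for u w
  proof -
    have "0 \<le> u \<bullet> (M *v u) + u \<bullet> ((\<gamma> *\<^sub>R S) *v (-w)) + (-w) \<bullet> ((\<gamma> *\<^sub>R S) *v u) + (-w) \<bullet> (Qm *v (-w))"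
      by (rule psd_block[OF blk])
    moreover have "w \<bullet> (S *v u) = u \<bullet> (S *v w)"
      using inner_mat_sym[OF Ss, of w u] by (simp add: inner_commute)
    ultimately show ?thesis
      by (simp add: scaleR_matrix_vector_assoc[symmetric] mv_uminus)
  qed
  have Mq: "0 \<le> u \<bullet> (M *v u)" for u using bq[of u 0] by simp
  have Qq: "0 \<le> w \<bullet> (Qm *v w)" for w using bq[of 0 w] by simp
  obtain BT where ET: "eigsys T BT" and cT: "card BT = CARD('n)"
    using spectral_exists[OF psd_sym[OF T(1)]] by blast
  have BT: "onb BT" by (rule eigsys_onb[OF ET cT])
  have finT: "finite BT" using BT by (simp add: onb_def)
  define t where "t b = b \<bullet> (T *v b)" for b
  have t0: "t b \<ge> 0" for b using T(1) by (simp add: t_def psd_quad)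
  have Tb: "T *v b = t b *\<^sub>R b" if "b \<in> BT" for b using ET that by (simp add: eigsys_def t_def)
  have Pb: "S *v (Sg *v (S *v b)) = (t b)^2 *\<^sub>R b" if "b \<in> BT" for b
  proof -
    have "S *v (Sg *v (S *v b)) = (S ** Sg ** S) *v b" by (simp add: matrix_vector_mul_assoc matrix_mul_assoc)
    also have "\<dots> = T *v (T *v b)" by (simp add: T(2)[symmetric] matrix_vector_mul_assoc)
    also have "\<dots> = (t b)^2 *\<^sub>R b" using that by (simp add: Tb matrix_vector_mult_scaleR power2_eq_square)
    finally show ?thesis .
  qed
  have SgS: "(S *v b) \<bullet> (Sg *v (S *v b')) = (t b')^2 * (b \<bullet> b')" if "b' \<in> BT" for b b'
  proof -
    have "(S *v b) \<bullet> (Sg *v (S *v b')) = b \<bullet> (S *v (Sg *v (S *v b')))"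
      using inner_mat_sym[OF Ss, of b "Sg *v (S *v b')"] by simp
    then show ?thesis using Pb[OF that] by simp
  qed
  define F where "F = {b \<in> BT. t b > 0}"
  have finF: "finite F" using finT by (simp add: F_def)
  define u where "u b = (1 / t b) *\<^sub>R (S *v b)" for b
  define a where "a b = (1 / t b) *\<^sub>R (Sg *v (S *v b))" for b
  have Sgs: "transpose Sg = Sg" using Sg by (rule psd_sym)
  have uon: "u b \<bullet> (Sg *v u b') = (if b = b' then 1 else 0)" if "b \<in> F" "b' \<in> F" for b b'
  proof -
    have tb: "t b > 0" "t b' > 0" "b \<in> BT" "b' \<in> BT" using that by (auto simp: F_def)
    have "u b \<bullet> (Sg *v u b') = (1 / t b) * (1 / t b') * ((t b')^2 * (b \<bullet> b'))"
      by (simp add: u_def matrix_vector_mult_scaleR SgS[OF tb(4)])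
    also have "\<dots> = (if b = b' then 1 else 0)"
      using tb onb_self[OF BT tb(3)] onb_orth[OF BT tb(3) tb(4)]
      by (auto simp: power2_eq_square field_simps)
    finally show ?thesis .
  qed
  have ca: "c \<bullet> a b = u b \<bullet> (Sg *v c)" for b c
  proof -
    have "c \<bullet> (Sg *v (S *v b)) = (S *v b) \<bullet> (Sg *v c)"
      using inner_mat_sym[OF Sgs, of c "S *v b"] by (simp add: inner_commute)
    then show ?thesis by (simp add: a_def u_def)
  qed
  have aS: "a b \<bullet> (S *v b) = t b" if "b \<in> F" for b
  proof -
    have tb: "t b > 0" "b \<in> BT" using that by (auto simp: F_def)
    have "(Sg *v (S *v b)) \<bullet> (S *v b) = (S *v b) \<bullet> (Sg *v (S *v b))" by (simp add: inner_commute)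
    also have "\<dots> = (t b)^2" using SgS[OF tb(2), of b] onb_self[OF BT tb(2)] by simp
    finally show ?thesis using tb by (simp add: a_def power2_eq_square)
  qed
  define g where "g b = (if b \<in> F then a b \<bullet> (M *v a b) else 0)" for b
  have each: "0 \<le> g b - 2 * \<gamma> * t b + b \<bullet> (Qm *v b)" if "b \<in> BT" for b
  proof (cases "b \<in> F")
    case True
    then show ?thesis using bq[of "a b" b] aS[OF True] by (simp add: g_def)
  next
    case False
    then have "t b = 0" using that t0[of b] by (auto simp: F_def)
    then show ?thesis using Qq[of b] False by (simp add: g_def)
  qed
  have sumeach: "0 \<le> (\<Sum>b\<in>BT. g b) - 2 * \<gamma> * (\<Sum>b\<in>BT. t b) + (\<Sum>b\<in>BT. b \<bullet> (Qm *v b))"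
    using sum_nonneg[of BT "\<lambda>b. g b - 2 * \<gamma> * t b + b \<bullet> (Qm *v b)", OF each]
    by (simp add: sum.distrib sum_subtractf sum_distrib_left)
  have trT: "(\<Sum>b\<in>BT. t b) = trace T" by (simp add: onb_trace[OF BT] t_def)
  have trQ: "(\<Sum>b\<in>BT. b \<bullet> (Qm *v b)) = trace Qm" by (simp add: onb_trace[OF BT])
  obtain BM where EM: "eigsys M BM" and cM: "card BM = CARD('n)"
    using spectral_exists[OF Ms] by blast
  have BM: "onb BM" by (rule eigsys_onb[OF EM cM])
  define m where "m c = c \<bullet> (M *v c)" for c
  have m0: "m c \<ge> 0" for c by (simp add: m_def Mq)
  have bes: "(\<Sum>b\<in>F. (u b \<bullet> (Sg *v c))^2) \<le> c \<bullet> (Sg *v c)" for c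
    by (rule bessel_form[OF Sg finF uon])
  have "(\<Sum>b\<in>BT. g b) = (\<Sum>b\<in>F. g b)"
    by (rule sum.mono_neutral_right[OF finT]) (auto simp: F_def g_def)
  also have "\<dots> = (\<Sum>b\<in>F. a b \<bullet> (M *v a b))"
    by (intro sum.cong refl) (simp add: g_def)
  also have "\<dots> = (\<Sum>b\<in>F. \<Sum>c\<in>BM. m c * (u b \<bullet> (Sg *v c))^2)"
    by (intro sum.cong refl) (subst quad_eig[OF BM EM], simp add: m_def[symmetric] ca)
  also have "\<dots> = (\<Sum>c\<in>BM. m c * (\<Sum>b\<in>F. (u b \<bullet> (Sg *v c))^2))"
    by (simp add: sum.swap[of _ F] sum_distrib_left)
  also have "\<dots> \<le> (\<Sum>c\<in>BM. m c * (c \<bullet> (Sg *v c)))"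
    by (intro sum_mono mult_left_mono bes m0)
  also have "\<dots> = trace (M ** Sg)" by (simp add: trace_eig[OF BM EM Ms] m_def)
  finally have "(\<Sum>b\<in>BT. g b) \<le> trace (M ** Sg)" .
  moreover have "0 \<le> (\<Sum>b\<in>BT. g b) - 2 * \<gamma> * trace T + trace Qm"
    using sumeach trT trQ by simp
  ultimately show ?thesis by linarith
qed



lemma trace_scaleR: "trace (c *\<^sub>R (A::real^'n^'n)) = c * trace A"
  by (simp add: trace_def sum_distrib_left)

lemma psd_congr:
  fixes S Sg :: "real^'n^'n"
  assumes Sg: "psd Sg" and Ss: "transpose S = S"
  shows "psd (S ** Sg ** S)"
proof -
  have "transpose (S ** Sg ** S) = S ** Sg ** S"
    using psd_sym[OF Sg] Ss by (simp add: matrix_transpose_mul matrix_mul_assoc)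
  moreover have "0 \<le> v \<bullet> ((S ** Sg ** S) *v v)" for v
  proof -
    have "v \<bullet> ((S ** Sg ** S) *v v) = (S *v v) \<bullet> (Sg *v (S *v v))"
      using inner_mat_sym[OF Ss, of v "Sg *v (S *v v)"] by (simp add: matrix_vector_mul_assoc matrix_mul_assoc)
    also have "\<dots> \<ge> 0" using Sg by (rule psd_quad)
    finally show ?thesis .
  qed
  ultimately show ?thesis by (simp add: psd_def)
qed

lemma core:
  fixes Q :: "(real^'n) measure"
  assumes rho: "\<rho> \<ge> 0" and Sh: "psd \<Sigma>h" and QB: "Q \<in> gelbrich_ball \<rho> \<mu>h \<Sigma>h"
    and F: "sdp_feasible J x \<mu>h \<Sigma>h \<gamma> z0 z Z q Qm lam"
  shows "measure Q (Theta J x) \<le> sdp_objective \<rho> \<mu>h \<Sigma>h \<gamma> z0 q Qm"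
proof -
  obtain \<mu> \<Sigma> where P: "prob_space Q" "sets Q = sets borel" and Sg: "psd \<Sigma>"
    and G: "gelbrich \<mu> \<Sigma> \<mu>h \<Sigma>h \<le> \<rho>" and H: "has_mean_cov Q \<mu> \<Sigma>"
    using QB by (auto simp: gelbrich_ball_def)
  have Th: "Theta J x \<in> sets borel"
  proof -
    have "Theta J x = (\<Inter>j\<in>{1..J}. {\<theta>. 0 \<le> x j \<bullet> \<theta>})" by (auto simp: Theta_def)
    also have "closed \<dots>" by (intro closed_INT ballI closed_halfspace_ge)
    finally show ?thesis by (rule borel_closed)
  qed
  have E: "measure Q (Theta J x) \<le> trace (Z ** \<Sigma>) + \<mu> \<bullet> (Z *v \<mu>) + 2 * (z \<bullet> \<mu>) + z0"
    by (rule expect_bound[OF P H psd_sym[OF Sg] quad_feas(1)[OF F] quad_feas(2)[OF F] Th])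
  have g0: "\<gamma> \<ge> 0" and Zp: "psd Z"
    and blk1: "psd (blockmat (\<gamma> *\<^sub>R mat 1 - Z) (\<gamma> *\<^sub>R msqrt \<Sigma>h) (\<gamma> *\<^sub>R msqrt \<Sigma>h) Qm)"
    and blk2: "psd (blockmat (\<gamma> *\<^sub>R mat 1 - Z) (colm (\<gamma> *\<^sub>R \<mu>h + z)) (rowm (\<gamma> *\<^sub>R \<mu>h + z)) (scalm q))"
    using F by (auto simp: sdp_feasible_def)
  define S where "S = msqrt \<Sigma>h"
  have S: "psd S" "S ** S = \<Sigma>h" using msqrt_props[OF Sh] by (auto simp: S_def)
  define T where "T = msqrt (S ** \<Sigma> ** S)"
  have T: "psd T" "T ** T = S ** \<Sigma> ** S"
    using msqrt_props[OF psd_congr[OF Sg psd_sym[OF S(1)]]] by (auto simp: T_def)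
  define M where "M = \<gamma> *\<^sub>R mat 1 - Z"
  have Ms: "transpose M = M" using psd_sym[OF Zp]
    by (simp add: M_def vec_eq_iff transpose_def mat_def)
  have K: "2 * \<gamma> * trace T \<le> trace (M ** \<Sigma>) + trace Qm"
    by (rule key_trace[OF Sg psd_sym[OF S(1)] g0 Ms _ T]) (use blk1 in \<open>simp add: M_def S_def\<close>)
  have "M ** \<Sigma> = \<gamma> *\<^sub>R \<Sigma> - Z ** \<Sigma>"
    by (simp add: matrix_eq M_def matrix_vector_mul_assoc[symmetric] matrix_vector_mult_diff_rdistrib
        scaleR_matrix_vector_assoc[symmetric])
  hence trM: "trace (M ** \<Sigma>) = \<gamma> * trace \<Sigma> - trace (Z ** \<Sigma>)"
    by (simp add: trace_sub trace_scaleR)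
  define c where "c = \<gamma> *\<^sub>R \<mu>h + z"
  have "0 \<le> \<mu> \<bullet> (M *v \<mu>) + \<mu> \<bullet> (colm c *v sv (-1)) + sv (-1) \<bullet> (rowm c *v \<mu>) + sv (-1) \<bullet> (scalm q *v sv (-1))"
    by (rule psd_block) (use blk2 in \<open>simp add: M_def c_def\<close>)
  hence C2: "0 \<le> \<gamma> * (\<mu> \<bullet> \<mu>) - \<mu> \<bullet> (Z *v \<mu>) - 2 * \<gamma> * (\<mu> \<bullet> \<mu>h) - 2 * (z \<bullet> \<mu>) + q"
    by (simp add: colm_sv sv_rowm sv_scalm M_def c_def matrix_vector_mult_diff_rdistrib
        scaleR_matrix_vector_assoc[symmetric] inner_diff_right inner_add_right inner_commute)
  define X where "X = (norm (\<mu> - \<mu>h))\<^sup>2 + trace (\<Sigma> + \<Sigma>h - 2 *\<^sub>R T)"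
  have "sqrt X \<le> \<rho>" using G by (simp add: gelbrich_def X_def T_def S_def)
  hence "X \<le> \<rho>^2" using rho
    by (metis abs_of_nonneg linorder_not_le nle_le power2_le_imp_le real_sqrt_abs real_sqrt_le_iff
        zero_le_power2 real_sqrt_ge_zero order_trans less_le_not_le)
  moreover have "X = \<mu> \<bullet> \<mu> - 2 * (\<mu> \<bullet> \<mu>h) + \<mu>h \<bullet> \<mu>h + trace \<Sigma> + trace \<Sigma>h - 2 * trace T"
    by (simp add: X_def power2_norm_eq_inner inner_diff_left inner_diff_right inner_commute
        trace_add trace_sub trace_scaleR)
  ultimately have Gx: "\<gamma> * (\<mu> \<bullet> \<mu> - 2 * (\<mu> \<bullet> \<mu>h) + \<mu>h \<bullet> \<mu>h + trace \<Sigma> + trace \<Sigma>h - 2 * trace T) \<le> \<gamma> * \<rho>^2"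
    using g0 by (simp add: mult_left_mono)
  have obj: "sdp_objective \<rho> \<mu>h \<Sigma>h \<gamma> z0 q Qm = z0 + \<gamma> * (\<rho>^2 - \<mu>h \<bullet> \<mu>h - trace \<Sigma>h) + q + trace Qm"
    by (simp add: sdp_objective_def power2_norm_eq_inner)
  show ?thesis using E K trM C2 Gx unfolding obj by (simp add: algebra_simps)
qed


theorem theorem2:
  fixes J :: nat and x :: "nat \<Rightarrow> real^'n" and \<rho> :: real
    and \<mu>h :: "real^'n" and \<Sigma>h :: "real^'n^'n"
  assumes "\<rho> \<ge> 0" and "psd \<Sigma>h"
  shows "(SUP Q \<in> gelbrich_ball \<rho> \<mu>h \<Sigma>h. ereal (measure Q (Theta J x)))
           \<le> U_star J x \<rho> \<mu>h \<Sigma>h"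
  unfolding U_star_def
proof (rule SUP_least)
  fix Q assume QB: "Q \<in> gelbrich_ball \<rho> \<mu>h \<Sigma>h"
  show "ereal (measure Q (Theta J x)) \<le> (INF p \<in> {(\<gamma>, z0, z, Z, q, Qm, lam). sdp_feasible J x \<mu>h \<Sigma>h \<gamma> z0 z Z q Qm lam}.
        ereal (case p of (\<gamma>, z0, z, Z, q, Qm, lam) \<Rightarrow> sdp_objective \<rho> \<mu>h \<Sigma>h \<gamma> z0 q Qm))"
  proof (rule INF_greatest)
    fix p assume "p \<in> {(\<gamma>, z0, z, Z, q, Qm, lam). sdp_feasible J x \<mu>h \<Sigma>h \<gamma> z0 z Z q Qm lam}"
    then obtain \<gamma> z0 z Z q Qm lam where p: "p = (\<gamma>, z0, z, Z, q, Qm, lam)"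
      and F: "sdp_feasible J x \<mu>h \<Sigma>h \<gamma> z0 z Z q Qm lam" by auto
    show "ereal (measure Q (Theta J x)) \<le> ereal (case p of (\<gamma>, z0, z, Z, q, Qm, lam) \<Rightarrow> sdp_objective \<rho> \<mu>h \<Sigma>h \<gamma> z0 q Qm)"
      using core[OF assms(1,2) QB F] p by simp
  qed
qed

end
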